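(* Let $y>0$ be fixed. For $\xi\in\mathbf{R}^{2\times 2}$ let $[\xi]=\xi-\xi_{11}\,e_1\otimes e_1$, where $e_1=(1,0)$, and define $W:\mathbf{R}^{2\times 2}\to\mathbf{R}$ by \[W(\xi)=\big|([\xi],\det\xi-y)\big|,\] the Euclidean norm of the vector $([\xi],\det\xi-y)\in\mathbf{R}^{2\times2}\times\mathbf{R}\cong\mathbf{R}^5$. Then for every $\xi\in\mathbf{R}^{2\times 2}$ and every $\eta\in\mathbf{R}^{2\times 2}$, \[W(\xi+\eta)-W(\xi)-DW(\xi)\cdot\eta\;\ge\;\rho(\xi)\det\eta,\qquad\text{where }\rho(\xi)=\frac{\det\xi-y}{W(\xi)}.\]
   Context: For $2\times2$ matrices, $\xi\cdot\eta=\mathrm{tr}(\xi^T\eta)$; for $a,b\in\mathbf{R}^2$, $a\otimes b$ is the matrix with $(i,j)$ entry $a_ib_j$. The function $W$ never vanishes (since $y\neq0$) and is differentiable everywhere; $DW(\xi)$ denotes its derivative (gradient) at $\xi$. *)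

theory Defs
  imports "HOL-Analysis.Analysis"
begin

definition outer :: "real^2 \<Rightarrow> real^2 \<Rightarrow> real^2^2" where
  "outer a b = (\<chi> i j. a $ i * b $ j)"

definition e1 :: "real^2" where
  "e1 = axis 1 1"

definition bracket :: "real^2^2 \<Rightarrow> real^2^2" where
  "bracket \<xi> = \<xi> - (\<xi> $ 1 $ 1) *\<^sub>R outer e1 e1"

text \<open>W(xi) = |([xi], det xi - y)|, Euclidean norm in R^{2x2} x R = R^5
  (the norm on real^2^2 is the Frobenius norm; on the product it is the
  Euclidean combination of the two norms).\<close>
definition W :: "real \<Rightarrow> real^2^2 \<Rightarrow> real" where
  "W y \<xi> = norm (bracket \<xi>, det \<xi> - y)"

definition rho :: "real \<Rightarrow> real^2^2 \<Rightarrow> real" where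
  "rho y \<xi> = (det \<xi> - y) / W y \<xi>"

end

theory Submission
  imports Defs
begin

lemma comp_hd: "((\<lambda>x::real^2^2. x$i$j) has_derivative (\<lambda>h. h$i$j)) F"
  by (intro bounded_linear_imp_has_derivative bounded_linear_compose[OF bounded_linear_vec_nth bounded_linear_vec_nth])

lemma W_eq: "W y x = sqrt ((x$1$2)^2 + (x$2$1)^2 + (x$2$2)^2 + (x$1$1*x$2$2 - x$1$2*x$2$1 - y)^2)"
  unfolding W_def norm_Pair bracket_def outer_def e1_def
  by (simp add: norm_vec_def L2_set_def sum_2 det_2 axis_def power2_eq_square)

lemma Q_pos: "(y::real) > 0 \<Longrightarrow> b^2 + c^2 + d^2 + (a*d - b*c - y)^2 > 0"
proof (cases "b = 0 \<and> c = 0 \<and> d = 0")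
  case True assume "y > 0" thus ?thesis using True by simp
next
  case False thus ?thesis by (smt (verit) zero_le_power2 power2_eq_square not_sum_power2_lt_zero sum_power2_gt_zero_iff)
qed

lemma CS4: "(u1::real) * v1 + u2 * v2 + u3 * v3 + u4 * v4 \<le> sqrt (u1^2+u2^2+u3^2+u4^2) * sqrt (v1^2+v2^2+v3^2+v4^2)"
proof -
  have "(u1 * v1 + u2 * v2 + u3 * v3 + u4 * v4)^2 \<le> (u1^2+u2^2+u3^2+u4^2) * (v1^2+v2^2+v3^2+v4^2)"
  proof -
    have "(u1^2+u2^2+u3^2+u4^2) * (v1^2+v2^2+v3^2+v4^2) - (u1 * v1 + u2 * v2 + u3 * v3 + u4 * v4)^2
      = (u1 * v2-u2 * v1)^2 + (u1 * v3-u3 * v1)^2 + (u1 * v4-u4 * v1)^2 + (u2 * v3-u3 * v2)^2 + (u2 * v4-u4 * v2)^2 + (u3 * v4-u4 * v3)^2"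
      by algebra
    moreover have "... \<ge> 0" by simp
    ultimately show ?thesis by linarith
  qed
  thus ?thesis by (simp add: real_le_rsqrt real_sqrt_mult[symmetric])
qed

theorem proposition2p1:
  fixes y :: real and \<xi> \<eta> :: "real^2^2"
  assumes "y > 0"
  shows "W y differentiable (at \<xi>) \<and>
         W y (\<xi> + \<eta>) - W y \<xi> - frechet_derivative (W y) (at \<xi>) \<eta> \<ge> rho y \<xi> * det \<eta>"
proof -
  define a where "a = \<xi>$1$1"
  define b where "b = \<xi>$1$2"
  define c where "c = \<xi>$2$1"
  define d where "d = \<xi>$2$2"
  define p where "p = \<eta>$1$1"
  define q where "q = \<eta>$1$2"
  define r where "r = \<eta>$2$1"
  define s where "s = \<eta>$2$2"
  define e where "e = a*d - b*c - y"
  define Q where "Q = b^2 + c^2 + d^2 + e^2"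
  have Qp: "Q > 0" unfolding Q_def e_def using Q_pos[OF assms] by blast
  define L where "L = (\<lambda>h::real^2^2. (b*h$1$2 + c*h$2$1 + d*h$2$2 + e*(a*h$2$2 + d*h$1$1 - b*h$2$1 - c*h$1$2)) / sqrt Q)"
  have Wf: "W y = (\<lambda>x. sqrt ((x$1$2)^2 + (x$2$1)^2 + (x$2$2)^2 + (x$1$1*x$2$2 - x$1$2*x$2$1 - y)^2))"
    by (rule ext, rule W_eq)
  have Qp': "0 < (\<xi>$1$2)^2 + (\<xi>$2$1)^2 + (\<xi>$2$2)^2 + (\<xi>$1$1*\<xi>$2$2 - \<xi>$1$2*\<xi>$2$1 - y)^2"
    using Qp by (simp add: Q_def e_def a_def b_def c_def d_def)
  have Qeq: "(\<xi>$1$2)^2 + (\<xi>$2$1)^2 + (\<xi>$2$2)^2 + (\<xi>$1$1*\<xi>$2$2 - \<xi>$1$2*\<xi>$2$1 - y)^2 = Q"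
    by (simp add: Q_def e_def a_def b_def c_def d_def)
  have sp0: "sqrt Q > 0" using Qp by simp
  have hd: "(W y has_derivative L) (at \<xi>)"
    unfolding Wf
    apply (rule has_derivative_eq_rhs)
     apply (rule derivative_eq_intros comp_hd refl Qp' | simp)+
    apply (rule ext)
    unfolding Qeq L_def using sp0 by (simp add: e_def a_def b_def c_def d_def field_simps)
  have fd: "frechet_derivative (W y) (at \<xi>) = L"
    using hd by (rule frechet_derivative_at[symmetric])
  have Wx: "W y \<xi> = sqrt Q" unfolding W_eq Q_def e_def a_def b_def c_def d_def ..
  have Wxe: "W y (\<xi>+\<eta>) = sqrt ((b+q)^2 + (c+r)^2 + (d+s)^2 + ((a+p)*(d+s) - (b+q)*(c+r) - y)^2)"
    unfolding W_eq a_def b_def c_def d_def p_def q_def r_def s_def by simp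
  have de: "det \<eta> = p * s - q*r" unfolding det_2 p_def q_def r_def s_def ..
  have Lh: "L \<eta> = (b*q + c*r + d * s + e*(a * s + d*p - b*r - c*q)) / sqrt Q"
    unfolding L_def p_def q_def r_def s_def ..
  have rh: "rho y \<xi> = e / sqrt Q" unfolding rho_def Wx det_2 e_def a_def b_def c_def d_def ..
  define t where "t = sqrt ((b+q)^2 + (c+r)^2 + (d+s)^2 + ((a+p)*(d+s) - (b+q)*(c+r) - y)^2)"
  have cs: "b*(b+q) + c*(c+r) + d*(d+s) + e*((a+p)*(d+s) - (b+q)*(c+r) - y) \<le> sqrt Q * t"
    unfolding Q_def t_def by (rule CS4)
  have sq: "sqrt Q * sqrt Q = Q" using Qp by simp
  have sp: "sqrt Q > 0" using Qp by simp
  have key: "t * sqrt Q - Q - (b*q + c*r + d * s + e*(a * s + d*p - b*r - c*q)) \<ge> e * (p * s - q*r)"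
    using cs unfolding Q_def e_def by (simp add: algebra_simps power2_eq_square)
  have "t - sqrt Q - (b*q + c*r + d * s + e*(a * s + d*p - b*r - c*q)) / sqrt Q \<ge> e / sqrt Q * (p * s - q*r)"
  proof -
    have "(t - sqrt Q - (b*q + c*r + d * s + e*(a * s + d*p - b*r - c*q)) / sqrt Q) * sqrt Q
       = t * sqrt Q - Q - (b*q + c*r + d * s + e*(a * s + d*p - b*r - c*q))"
      using sp sq by (simp add: field_simps)
    moreover have "e / sqrt Q * (p * s - q*r) * sqrt Q = e * (p * s - q*r)" using sp by simp
    ultimately show ?thesis using key sp
      by (metis mult_le_cancel_right_pos)
  qed
  thus ?thesis using hd unfolding fd Wx Wxe Lh rh de t_def[symmetric]
    by (auto simp: differentiable_def)
qed

end
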